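(* In the setting described in the context, let $c_0,c_1$ be real constants and let $D$ be the torsionless connection $$D\Xi^a=c_0X^a\varrho\otimes\varrho+c_1\big((-1)^{\hat a}\Xi^a\otimes\varrho-\varrho\otimes\Xi^a\big),\qquad a=1,2,3,$$ extended to $\Omega^1\otimes_{\mathcal A}\Omega^1$ by $D(\Xi^a\otimes\Xi^b)=D\Xi^a\otimes\Xi^b+(-1)^{\hat a}\sigma_{12}(\Xi^a\otimes D\Xi^b)$, $\sigma_{12}=\sigma\otimes1$. Let $g:\Omega^1\otimes_{\mathcal A}\Omega^1\to\mathcal A$ be the $\mathcal A$-bilinear ($OSp_h(2/1)$-invariant) metric with $g(\Xi^a\otimes\Xi^b)=g^{ab}$, where $$(g^{ab})=\begin{pmatrix}-\frac h2&0&-1\\0&1&0\\1&0&0\end{pmatrix}.$$ Then $D$ is compatible with $g$, i.e. $d\circ g=(1\otimes g)\circ D$ on $\Omega^1\otimes_{\mathcal A}\Omega^1$, only for the trivial choice $c_0=c_1=0$; for any other choice of $(c_0,c_1)$ the covariant derivative $D$ is not metric.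
   Context: Fix a real (commuting) parameter $h$. $\mathcal A$ is the $\mathbb Z_2$-graded algebra generated by odd $\theta_1,\theta_2$ and even $x$ with relations $[\theta_1,x]=-hx\theta_2$, $\{\theta_1,\theta_2\}=0$, $[\theta_2,x]=0$, $\theta_1^2=-\frac h2(x^2-2\theta_1\theta_2)$, $\theta_2^2=0$. Write $(X^1,X^2,X^3)=(\theta_1,x,\theta_2)$, index parities $\hat1=\hat3=0$, $\hat2=1$, and $\Xi^a=dX^a$, i.e. $\xi_1=d\theta_1$, $\eta=dx$, $\xi_2=d\theta_2$; $\xi_1,\xi_2$ are even and $\eta$ odd. The exterior derivative $d$ is nilpotent and satisfies the graded Leibniz rule. The differential calculus has the relations $\xi_1\wedge\eta-\eta\wedge\xi_1=h\eta\wedge\xi_2$, $\xi_1\wedge\xi_2-\xi_2\wedge\xi_1=h\xi_2\wedge\xi_2$, $\eta\wedge\xi_2=\xi_2\wedge\eta$, $\eta\wedge\eta=-\frac h2\xi_2\wedge\xi_2$; and $[\theta_1,\xi_1]=h(\theta_1\xi_2+x\eta-\theta_2\xi_1-\frac h2\theta_2\xi_2)$, $\{\theta_1,\eta\}=hx\xi_2$, $[\theta_1,\xi_2]=h\theta_2\xi_2$, $[x,\xi_1]=-h\theta_2\eta$, $[x,\eta]=-h\theta_2\xi_2$, $[x,\xi_2]=0$, $[\theta_2,\xi_1]=-h\theta_2\xi_2$, $\{\theta_2,\eta\}=0$, $[\theta_2,\xi_2]=0$. Set $\varrho=\theta_1\xi_2+x\eta-\theta_2\xi_1-\frac h2\theta_2\xi_2$.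 The map $\sigma$ on $\Omega^1\otimes_{\mathcal A}\Omega^1$ is the $\mathcal A$-bilinear map given by $\sigma(\xi_1\otimes\xi_1)=\xi_1\otimes\xi_1-h(\xi_1\otimes\xi_2+\eta\otimes\eta-\xi_2\otimes\xi_1-\frac h2\xi_2\otimes\xi_2)$, $\sigma(\xi_1\otimes\eta)=\eta\otimes\xi_1+h\xi_2\otimes\eta$, $\sigma(\xi_1\otimes\xi_2)=\xi_2\otimes\xi_1+h\xi_2\otimes\xi_2$, $\sigma(\eta\otimes\xi_1)=\xi_1\otimes\eta-h\eta\otimes\xi_2$, $\sigma(\eta\otimes\eta)=-\eta\otimes\eta-h\xi_2\otimes\xi_2$, $\sigma(\eta\otimes\xi_2)=\xi_2\otimes\eta$, $\sigma(\xi_2\otimes\xi_1)=\xi_1\otimes\xi_2-h\xi_2\otimes\xi_2$, $\sigma(\xi_2\otimes\eta)=\eta\otimes\xi_2$, $\sigma(\xi_2\otimes\xi_2)=\xi_2\otimes\xi_2$. The covariant derivative satisfies $D(f\xi)=df\otimes\xi+(-1)^{\hat f}fD\xi$ and $D(\xi f)=(-1)^{\hat\xi}\sigma(\xi\otimes df)+(D\xi)f$ for homogeneous $f\in\mathcal A$, $\xi\in\Omega^1$. The map $1\otimes g:\Omega^1\otimes_{\mathcal A}\Omega^1\otimes_{\mathcal A}\Omega^1\to\Omega^1$ applies $g$ to the last two tensor factors. *)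

theory Defs
  imports Main "HOL-Computational_Algebra.Polynomial"
begin

text \<open>
  Abstract rendering of the h-deformed superplane setting.
  'a : the algebra A (a unital real algebra, not commutative)
  'w : Omega^1 (an A-bimodule),
  't : Omega^1 (x)_A Omega^1,
  'u : Omega^1 (x)_A Omega^1 (x)_A Omega^1.
  Generators: X^1 = theta1, X^2 = x, X^3 = theta2; Xi^a = d X^a.
\<close>

record ('a, 'w, 't, 'u) hcalc =
  th1 :: 'a
  xx  :: 'a
  th2 :: 'a
  Aev :: "'a set"
  Aod :: "'a set"
  lw  :: "'a \<Rightarrow> 'w \<Rightarrow> 'w"
  rw  :: "'w \<Rightarrow> 'a \<Rightarrow> 'w"
  lt  :: "'a \<Rightarrow> 't \<Rightarrow> 't"
  rt  :: "'t \<Rightarrow> 'a \<Rightarrow> 't"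
  lu  :: "'a \<Rightarrow> 'u \<Rightarrow> 'u"
  dd  :: "'a \<Rightarrow> 'w"
  t2  :: "'w \<Rightarrow> 'w \<Rightarrow> 't"
  twt :: "'w \<Rightarrow> 't \<Rightarrow> 'u"
  ttw :: "'t \<Rightarrow> 'w \<Rightarrow> 'u"
  sig :: "'t \<Rightarrow> 't"
  sig12 :: "'u \<Rightarrow> 'u"
  gm  :: "'t \<Rightarrow> 'a"
  g1  :: "'u \<Rightarrow> 'w"
  DD  :: "'t \<Rightarrow> 'u"

definition XX :: "('a,'w,'t,'u,'z) hcalc_scheme \<Rightarrow> nat \<Rightarrow> 'a" where
  "XX C a = (if a = 1 then th1 C else if a = 2 then xx C else th2 C)"

definition Xi :: "('a,'w,'t,'u,'z) hcalc_scheme \<Rightarrow> nat \<Rightarrow> 'w" where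
  "Xi C a = dd C (XX C a)"

definition hat :: "nat \<Rightarrow> nat" where
  "hat a = (if a = 2 then 1 else 0)"

definition polyA :: "'a::real_algebra_1 \<Rightarrow> real poly \<Rightarrow> 'a" where
  "polyA a p = (\<Sum>i\<le>degree p. coeff p i *\<^sub>R a ^ i)"

definition rho :: "('a::real_algebra_1,'w::real_vector,'t,'u,'z) hcalc_scheme \<Rightarrow> real \<Rightarrow> 'w" where
  "rho C h = lw C (th1 C) (Xi C 3) + lw C (xx C) (Xi C 2) - lw C (th2 C) (Xi C 1)
             - (h/2) *\<^sub>R lw C (th2 C) (Xi C 3)"

definition gmat :: "real \<Rightarrow> nat \<Rightarrow> nat \<Rightarrow> real" where
  "gmat h a b =
     (if a = 1 \<and> b = 1 then - h/2
      else if a = 1 \<and> b = 3 then -1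
      else if a = 2 \<and> b = 2 then 1
      else if a = 3 \<and> b = 1 then 1
      else 0)"

definition alg_ok :: "('a::real_algebra_1,'w,'t,'u,'z) hcalc_scheme \<Rightarrow> real \<Rightarrow> bool" where
  "alg_ok C h \<longleftrightarrow>
    (let t1 = th1 C; x = xx C; t2' = th2 C in
      t1 * x - x * t1 = - h *\<^sub>R (x * t2')
    \<and> t1 * t2' + t2' * t1 = 0
    \<and> t2' * x - x * t2' = 0
    \<and> t1 * t1 = - (h/2) *\<^sub>R (x * x - 2 *\<^sub>R (t1 * t2'))
    \<and> t2' * t2' = 0
    \<comment> \<open>Z2-grading\<close>
    \<and> 1 \<in> Aev C \<and> x \<in> Aev C \<and> t1 \<in> Aod C \<and> t2' \<in> Aod C
    \<and> (\<forall>f\<in>Aev C. \<forall>g\<in>Aev C. f * g \<in> Aev C \<and> f + g \<in> Aev C)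
    \<and> (\<forall>f\<in>Aev C. \<forall>g\<in>Aod C. f * g \<in> Aod C \<and> g * f \<in> Aod C)
    \<and> (\<forall>f\<in>Aod C. \<forall>g\<in>Aod C. f * g \<in> Aev C \<and> f + g \<in> Aod C)
    \<and> (\<forall>c. \<forall>f\<in>Aev C. c *\<^sub>R f \<in> Aev C) \<and> (\<forall>c. \<forall>f\<in>Aod C. c *\<^sub>R f \<in> Aod C)
    \<and> Aev C \<inter> Aod C = {0}
    \<and> (\<forall>f. \<exists>f0\<in>Aev C. \<exists>f1\<in>Aod C. f = f0 + f1)
    \<comment> \<open>PBW basis x^n, x^n theta1, x^n theta2, x^n theta1 theta2\<close>
    \<and> (\<forall>f. \<exists>p0 p1 p2 p3. f = polyA x p0 + polyA x p1 * t1 + polyA x p2 * t2'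
                                + polyA x p3 * (t1 * t2'))
    \<and> (\<forall>p0 p1 p2 p3. polyA x p0 + polyA x p1 * t1 + polyA x p2 * t2'
                                + polyA x p3 * (t1 * t2') = 0
                      \<longrightarrow> p0 = 0 \<and> p1 = 0 \<and> p2 = 0 \<and> p3 = 0))"

definition modules_ok :: "('a::real_algebra_1,'w::real_vector,'t::real_vector,'u::real_vector,'z) hcalc_scheme \<Rightarrow> bool" where
  "modules_ok C \<longleftrightarrow>
    \<comment> \<open>Omega^1 is an A-bimodule\<close>
      (\<forall>f g w. lw C (f * g) w = lw C f (lw C g w)) \<and> (\<forall>w. lw C 1 w = w)
    \<and> (\<forall>f g w. rw C w (f * g) = rw C (rw C w f) g) \<and> (\<forall>w. rw C w 1 = w)
    \<and> (\<forall>f g w. lw C f (rw C w g) = rw C (lw C f w) g)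
    \<and> (\<forall>w. linear (\<lambda>f. lw C f w)) \<and> (\<forall>f. linear (lw C f))
    \<and> (\<forall>w. linear (rw C w)) \<and> (\<forall>f. linear (\<lambda>w. rw C w f))
    \<comment> \<open>Omega^1 (x) Omega^1 is an A-bimodule\<close>
    \<and> (\<forall>f g t. lt C (f * g) t = lt C f (lt C g t)) \<and> (\<forall>t. lt C 1 t = t)
    \<and> (\<forall>f g t. rt C t (f * g) = rt C (rt C t f) g) \<and> (\<forall>t. rt C t 1 = t)
    \<and> (\<forall>f g t. lt C f (rt C t g) = rt C (lt C f t) g)
    \<and> (\<forall>t. linear (\<lambda>f. lt C f t)) \<and> (\<forall>f. linear (lt C f))
    \<and> (\<forall>t. linear (rt C t)) \<and> (\<forall>f. linear (\<lambda>t. rt C t f))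
    \<comment> \<open>triple tensor product is a left A-module\<close>
    \<and> (\<forall>f g u. lu C (f * g) u = lu C f (lu C g u)) \<and> (\<forall>u. lu C 1 u = u)
    \<and> (\<forall>u. linear (\<lambda>f. lu C f u)) \<and> (\<forall>f. linear (lu C f))
    \<comment> \<open>Omega^1 is a free left A-module with basis xi1, eta, xi2\<close>
    \<and> (\<forall>w. \<exists>f1 f2 f3. w = lw C f1 (Xi C 1) + lw C f2 (Xi C 2) + lw C f3 (Xi C 3))
    \<and> (\<forall>f1 f2 f3. lw C f1 (Xi C 1) + lw C f2 (Xi C 2) + lw C f3 (Xi C 3) = 0
                   \<longrightarrow> f1 = 0 \<and> f2 = 0 \<and> f3 = 0)
    \<comment> \<open>the tensor product over A\<close>
    \<and> (\<forall>w. linear (t2 C w)) \<and> (\<forall>w'. linear (\<lambda>w. t2 C w w'))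
    \<and> (\<forall>w f w'. t2 C (rw C w f) w' = t2 C w (lw C f w'))
    \<and> (\<forall>w f w'. t2 C (lw C f w) w' = lt C f (t2 C w w'))
    \<and> (\<forall>w f w'. t2 C w (rw C w' f) = rt C (t2 C w w') f)
    \<and> (\<forall>t. \<exists>ps. t = (\<Sum>(w, w')\<leftarrow>ps. t2 C w w'))
    \<comment> \<open>triple tensors: w (x) t and t (x) w\<close>
    \<and> (\<forall>w. linear (twt C w)) \<and> (\<forall>t. linear (\<lambda>w. twt C w t))
    \<and> (\<forall>w. linear (ttw C w)) \<and> (\<forall>t. linear (\<lambda>w. ttw C w t))
    \<and> (\<forall>f w t. twt C (lw C f w) t = lu C f (twt C w t))
    \<and> (\<forall>f w t. twt C (rw C w f) t = twt C w (lt C f t))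
    \<and> (\<forall>f w t. ttw C (lt C f t) w = lu C f (ttw C t w))
    \<and> (\<forall>f w t. ttw C (rt C t f) w = ttw C t (lw C f w))
    \<and> (\<forall>a b c. ttw C (t2 C a b) c = twt C a (t2 C b c))
    \<comment> \<open>exterior derivative: real-linear graded derivation\<close>
    \<and> linear (dd C)
    \<and> (\<forall>f\<in>Aev C. \<forall>g. dd C (f * g) = rw C (dd C f) g + lw C f (dd C g))
    \<and> (\<forall>f\<in>Aod C. \<forall>g. dd C (f * g) = rw C (dd C f) g - lw C f (dd C g))"

definition calc_ok :: "('a::real_algebra_1,'w::real_vector,'t,'u,'z) hcalc_scheme \<Rightarrow> real \<Rightarrow> bool" where
  "calc_ok C h \<longleftrightarrow>
    (let t1 = th1 C; x = xx C; t2' = th2 C; x1 = Xi C 1; e = Xi C 2; x2 = Xi C 3;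
         L = lw C; R = rw C in
      L t1 x1 - R x1 t1 = h *\<^sub>R rho C h
    \<and> L t1 e + R e t1 = h *\<^sub>R L x x2
    \<and> L t1 x2 - R x2 t1 = h *\<^sub>R L t2' x2
    \<and> L x x1 - R x1 x = - h *\<^sub>R L t2' e
    \<and> L x e - R e x = - h *\<^sub>R L t2' x2
    \<and> L x x2 - R x2 x = 0
    \<and> L t2' x1 - R x1 t2' = - h *\<^sub>R L t2' x2
    \<and> L t2' e + R e t2' = 0
    \<and> L t2' x2 - R x2 t2' = 0)"

definition sigma_ok :: "('a::real_algebra_1,'w::real_vector,'t::real_vector,'u::real_vector,'z) hcalc_scheme \<Rightarrow> real \<Rightarrow> bool" where
  "sigma_ok C h \<longleftrightarrow>
    (let x1 = Xi C 1; e = Xi C 2; x2 = Xi C 3; T = t2 C; S = sig C in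
      linear S
    \<and> (\<forall>f t. S (lt C f t) = lt C f (S t)) \<and> (\<forall>f t. S (rt C t f) = rt C (S t) f)
    \<and> S (T x1 x1) = T x1 x1 - h *\<^sub>R (T x1 x2 + T e e - T x2 x1 - (h/2) *\<^sub>R T x2 x2)
    \<and> S (T x1 e) = T e x1 + h *\<^sub>R T x2 e
    \<and> S (T x1 x2) = T x2 x1 + h *\<^sub>R T x2 x2
    \<and> S (T e x1) = T x1 e - h *\<^sub>R T e x2
    \<and> S (T e e) = - T e e - h *\<^sub>R T x2 x2
    \<and> S (T e x2) = T x2 e
    \<and> S (T x2 x1) = T x1 x2 - h *\<^sub>R T x2 x2
    \<and> S (T x2 e) = T e x2
    \<and> S (T x2 x2) = T x2 x2
    \<and> linear (sig12 C) \<and> (\<forall>t w. sig12 C (ttw C t w) = ttw C (S t) w))"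

definition metric_ok :: "('a::real_algebra_1,'w::real_vector,'t::real_vector,'u::real_vector,'z) hcalc_scheme \<Rightarrow> real \<Rightarrow> bool" where
  "metric_ok C h \<longleftrightarrow>
      linear (gm C)
    \<and> (\<forall>f t. gm C (lt C f t) = f * gm C t) \<and> (\<forall>f t. gm C (rt C t f) = gm C t * f)
    \<and> (\<forall>a\<in>{1,2,3}. \<forall>b\<in>{1,2,3}. gm C (t2 C (Xi C a) (Xi C b)) = of_real (gmat h a b))
    \<and> linear (g1 C) \<and> (\<forall>w t. g1 C (twt C w t) = rw C w (gm C t))"

definition DXi :: "('a::real_algebra_1,'w::real_vector,'t::real_vector,'u,'z) hcalc_scheme \<Rightarrow> real \<Rightarrow> real \<Rightarrow> real \<Rightarrow> nat \<Rightarrow> 't" where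
  "DXi C h c0 c1 a =
     c0 *\<^sub>R lt C (XX C a) (t2 C (rho C h) (rho C h))
     + c1 *\<^sub>R (((-1::real) ^ hat a) *\<^sub>R t2 C (Xi C a) (rho C h) - t2 C (rho C h) (Xi C a))"

definition connection_ok :: "('a::real_algebra_1,'w::real_vector,'t::real_vector,'u::real_vector,'z) hcalc_scheme \<Rightarrow> real \<Rightarrow> real \<Rightarrow> real \<Rightarrow> bool" where
  "connection_ok C h c0 c1 \<longleftrightarrow>
      linear (DD C)
    \<and> (\<forall>a\<in>{1,2,3}. \<forall>b\<in>{1,2,3}.
         DD C (t2 C (Xi C a) (Xi C b)) =
           ttw C (DXi C h c0 c1 a) (Xi C b)
           + ((-1::real) ^ hat a) *\<^sub>R sig12 C (twt C (Xi C a) (DXi C h c0 c1 b)))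
    \<and> (\<forall>f\<in>Aev C. \<forall>t. DD C (lt C f t) = twt C (dd C f) t + lu C f (DD C t))
    \<and> (\<forall>f\<in>Aod C. \<forall>t. DD C (lt C f t) = twt C (dd C f) t - lu C f (DD C t))"

definition metric_compatible :: "('a,'w,'t,'u,'z) hcalc_scheme \<Rightarrow> bool" where
  "metric_compatible C \<longleftrightarrow> (\<forall>t. dd C (gm C t) = g1 C (DD C t))"

end

theory Submission
  imports Defs
begin

locale hs =
  fixes C :: "('a::real_algebra_1, 'w::real_vector, 't::real_vector, 'u::real_vector) hcalc"
    and h :: real
  assumes A: "alg_ok C h" and M: "modules_ok C" and Cc: "calc_ok C h"
    and S: "sigma_ok C h" and G: "metric_ok C h"
begin

abbreviation "a1 \<equiv> th1 C"
abbreviation "xv \<equiv> xx C"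
abbreviation "a2 \<equiv> th2 C"
abbreviation "e1 \<equiv> Xi C 1"
abbreviation "e2 \<equiv> Xi C 2"
abbreviation "e3 \<equiv> Xi C 3"
abbreviation "r \<equiv> rho C h"

lemma L_mult[rule_format]: "(\<forall>f g w. lw C (f * g) w = lw C f (lw C g w))"
  using M unfolding modules_ok_def by (elim conjE) assumption

lemma L_one[rule_format]: "(\<forall>w. lw C 1 w = w)"
  using M unfolding modules_ok_def by (elim conjE) assumption

lemma R_mult[rule_format]: "(\<forall>f g w. rw C w (f * g) = rw C (rw C w f) g)"
  using M unfolding modules_ok_def by (elim conjE) assumption

lemma R_one[rule_format]: "(\<forall>w. rw C w 1 = w)"
  using M unfolding modules_ok_def by (elim conjE) assumption

lemma LR[rule_format]: "(\<forall>f g w. lw C f (rw C w g) = rw C (lw C f w) g)"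
  using M unfolding modules_ok_def by (elim conjE) assumption

lemma L_lin1[rule_format]: "(\<forall>w. linear (\<lambda>f. lw C f w))"
  using M unfolding modules_ok_def by (elim conjE) assumption

lemma L_lin2[rule_format]: "(\<forall>f. linear (lw C f))"
  using M unfolding modules_ok_def by (elim conjE) assumption

lemma R_lin2[rule_format]: "(\<forall>w. linear (rw C w))"
  using M unfolding modules_ok_def by (elim conjE) assumption

lemma R_lin1[rule_format]: "(\<forall>f. linear (\<lambda>w. rw C w f))"
  using M unfolding modules_ok_def by (elim conjE) assumption

lemma lt_mult[rule_format]: "(\<forall>f g t. lt C (f * g) t = lt C f (lt C g t))"
  using M unfolding modules_ok_def by (elim conjE) assumption

lemma lt_one[rule_format]: "(\<forall>t. lt C 1 t = t)"
  using M unfolding modules_ok_def by (elim conjE) assumption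

lemma rt_mult[rule_format]: "(\<forall>f g t. rt C t (f * g) = rt C (rt C t f) g)"
  using M unfolding modules_ok_def by (elim conjE) assumption

lemma rt_one[rule_format]: "(\<forall>t. rt C t 1 = t)"
  using M unfolding modules_ok_def by (elim conjE) assumption

lemma ltrt[rule_format]: "(\<forall>f g t. lt C f (rt C t g) = rt C (lt C f t) g)"
  using M unfolding modules_ok_def by (elim conjE) assumption

lemma lt_lin1[rule_format]: "(\<forall>t. linear (\<lambda>f. lt C f t))"
  using M unfolding modules_ok_def by (elim conjE) assumption

lemma lt_lin2[rule_format]: "(\<forall>f. linear (lt C f))"
  using M unfolding modules_ok_def by (elim conjE) assumption

lemma rt_lin2[rule_format]: "(\<forall>t. linear (rt C t))"
  using M unfolding modules_ok_def by (elim conjE) assumption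

lemma rt_lin1[rule_format]: "(\<forall>f. linear (\<lambda>t. rt C t f))"
  using M unfolding modules_ok_def by (elim conjE) assumption

lemma lu_mult[rule_format]: "(\<forall>f g u. lu C (f * g) u = lu C f (lu C g u))"
  using M unfolding modules_ok_def by (elim conjE) assumption

lemma lu_one[rule_format]: "(\<forall>u. lu C 1 u = u)"
  using M unfolding modules_ok_def by (elim conjE) assumption

lemma lu_lin1[rule_format]: "(\<forall>u. linear (\<lambda>f. lu C f u))"
  using M unfolding modules_ok_def by (elim conjE) assumption

lemma lu_lin2[rule_format]: "(\<forall>f. linear (lu C f))"
  using M unfolding modules_ok_def by (elim conjE) assumption

lemma span[rule_format]: "(\<forall>w. \<exists>f1 f2 f3. w = lw C f1 (Xi C 1) + lw C f2 (Xi C 2) + lw C f3 (Xi C 3))"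
  using M unfolding modules_ok_def by (elim conjE) assumption

lemma free[rule_format]: "(\<forall>f1 f2 f3. lw C f1 (Xi C 1) + lw C f2 (Xi C 2) + lw C f3 (Xi C 3) = 0 \<longrightarrow> f1 = 0 \<and> f2 = 0 \<and> f3 = 0)"
  using M unfolding modules_ok_def by (elim conjE) assumption

lemma T_lin2[rule_format]: "(\<forall>w. linear (t2 C w))"
  using M unfolding modules_ok_def by (elim conjE) assumption

lemma T_lin1[rule_format]: "(\<forall>w'. linear (\<lambda>w. t2 C w w'))"
  using M unfolding modules_ok_def by (elim conjE) assumption

lemma T_RL[rule_format]: "(\<forall>w f w'. t2 C (rw C w f) w' = t2 C w (lw C f w'))"
  using M unfolding modules_ok_def by (elim conjE) assumption

lemma T_L[rule_format]: "(\<forall>w f w'. t2 C (lw C f w) w' = lt C f (t2 C w w'))"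
  using M unfolding modules_ok_def by (elim conjE) assumption

lemma T_R[rule_format]: "(\<forall>w f w'. t2 C w (rw C w' f) = rt C (t2 C w w') f)"
  using M unfolding modules_ok_def by (elim conjE) assumption

lemma T_sum[rule_format]: "(\<forall>t. \<exists>ps. t = (\<Sum>(w, w')\<leftarrow>ps. t2 C w w'))"
  using M unfolding modules_ok_def by (elim conjE) assumption

lemma twt_lin2[rule_format]: "(\<forall>w. linear (twt C w))"
  using M unfolding modules_ok_def by (elim conjE) assumption

lemma twt_lin1[rule_format]: "(\<forall>t. linear (\<lambda>w. twt C w t))"
  using M unfolding modules_ok_def by (elim conjE) assumption

lemma ttw_lin2[rule_format]: "(\<forall>w. linear (ttw C w))"
  using M unfolding modules_ok_def by (elim conjE) assumption

lemma ttw_lin1[rule_format]: "(\<forall>t. linear (\<lambda>w. ttw C w t))"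
  using M unfolding modules_ok_def by (elim conjE) assumption

lemma twt_L[rule_format]: "(\<forall>f w t. twt C (lw C f w) t = lu C f (twt C w t))"
  using M unfolding modules_ok_def by (elim conjE) assumption

lemma twt_R[rule_format]: "(\<forall>f w t. twt C (rw C w f) t = twt C w (lt C f t))"
  using M unfolding modules_ok_def by (elim conjE) assumption

lemma ttw_L[rule_format]: "(\<forall>f w t. ttw C (lt C f t) w = lu C f (ttw C t w))"
  using M unfolding modules_ok_def by (elim conjE) assumption

lemma ttw_R[rule_format]: "(\<forall>f w t. ttw C (rt C t f) w = ttw C t (lw C f w))"
  using M unfolding modules_ok_def by (elim conjE) assumption

lemma ttw_T[rule_format]: "(\<forall>a b c. ttw C (t2 C a b) c = twt C a (t2 C b c))"
  using M unfolding modules_ok_def by (elim conjE) assumption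

lemma d_lin[rule_format]: "linear (dd C)"
  using M unfolding modules_ok_def by (elim conjE) assumption

lemma d_ev[rule_format]: "(\<forall>f\<in>Aev C. \<forall>g. dd C (f * g) = rw C (dd C f) g + lw C f (dd C g))"
  using M unfolding modules_ok_def by (elim conjE) assumption

lemma d_od[rule_format]: "(\<forall>f\<in>Aod C. \<forall>g. dd C (f * g) = rw C (dd C f) g - lw C f (dd C g))"
  using M unfolding modules_ok_def by (elim conjE) assumption


lemma alg_rel1: "a1 * xv - xv * a1 = - h *\<^sub>R (xv * a2)"
  using A unfolding alg_ok_def Let_def by (elim conjE) assumption
lemma alg_rel2: "a1 * a2 + a2 * a1 = 0"
  using A unfolding alg_ok_def Let_def by (elim conjE) assumption
lemma alg_rel3: "a2 * xv - xv * a2 = 0"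
  using A unfolding alg_ok_def Let_def by (elim conjE) assumption
lemma alg_rel4: "a2 * a2 = 0"
  using A unfolding alg_ok_def Let_def by (elim conjE) assumption
lemma alg_rel5: "xv \<in> Aev C"
  using A unfolding alg_ok_def Let_def by (elim conjE) assumption
lemma alg_rel6: "a1 \<in> Aod C"
  using A unfolding alg_ok_def Let_def by (elim conjE) assumption
lemma alg_rel7: "a2 \<in> Aod C"
  using A unfolding alg_ok_def Let_def by (elim conjE) assumption

lemma alg_grade1: "1 \<in> Aev C"
  using A unfolding alg_ok_def Let_def by (elim conjE) assumption
lemma alg_grade2: "\<forall>c. \<forall>f\<in>Aev C. c *\<^sub>R f \<in> Aev C"
  using A unfolding alg_ok_def Let_def by (elim conjE) assumption
lemma alg_grade3: "\<forall>c. \<forall>f\<in>Aod C. c *\<^sub>R f \<in> Aod C"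
  using A unfolding alg_ok_def Let_def by (elim conjE) assumption

lemma alg_dec: "\<forall>f. \<exists>f0\<in>Aev C. \<exists>f1\<in>Aod C. f = f0 + f1"
  using A unfolding alg_ok_def Let_def by (elim conjE) assumption

lemma pbw[rule_format]: "\<forall>p0 p1 p2 p3. polyA xv p0 + polyA xv p1 * a1 + polyA xv p2 * a2 + polyA xv p3 * (a1 * a2) = 0
    \<longrightarrow> p0 = 0 \<and> p1 = 0 \<and> p2 = 0 \<and> p3 = 0"
  using A unfolding alg_ok_def Let_def by (elim conjE) assumption

lemma calc_rel1: "lw C a1 e1 - rw C e1 a1 = h *\<^sub>R r"
  using Cc unfolding calc_ok_def Let_def by (elim conjE) assumption

lemma calc_rel2: "lw C a1 e2 + rw C e2 a1 = h *\<^sub>R lw C xv e3"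
  using Cc unfolding calc_ok_def Let_def by (elim conjE) assumption

lemma calc_rel3: "lw C a1 e3 - rw C e3 a1 = h *\<^sub>R lw C a2 e3"
  using Cc unfolding calc_ok_def Let_def by (elim conjE) assumption

lemma calc_rel4: "lw C xv e1 - rw C e1 xv = - h *\<^sub>R lw C a2 e2"
  using Cc unfolding calc_ok_def Let_def by (elim conjE) assumption

lemma calc_rel5: "lw C xv e2 - rw C e2 xv = - h *\<^sub>R lw C a2 e3"
  using Cc unfolding calc_ok_def Let_def by (elim conjE) assumption

lemma calc_rel6: "lw C xv e3 - rw C e3 xv = 0"
  using Cc unfolding calc_ok_def Let_def by (elim conjE) assumption

lemma calc_rel7: "lw C a2 e1 - rw C e1 a2 = - h *\<^sub>R lw C a2 e3"
  using Cc unfolding calc_ok_def Let_def by (elim conjE) assumption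

lemma calc_rel8: "lw C a2 e2 + rw C e2 a2 = 0"
  using Cc unfolding calc_ok_def Let_def by (elim conjE) assumption

lemma calc_rel9: "lw C a2 e3 - rw C e3 a2 = 0"
  using Cc unfolding calc_ok_def Let_def by (elim conjE) assumption

lemma sig_lin: "linear (sig C)"
  using S unfolding sigma_ok_def Let_def by (elim conjE) assumption

lemma sig_lt[rule_format]: "\<forall>f t. sig C (lt C f t) = lt C f (sig C t)"
  using S unfolding sigma_ok_def Let_def by (elim conjE) assumption

lemma sig_rt[rule_format]: "\<forall>f t. sig C (rt C t f) = rt C (sig C t) f"
  using S unfolding sigma_ok_def Let_def by (elim conjE) assumption

lemma sig31: "sig C (t2 C e3 e1) = t2 C e1 e3 - h *\<^sub>R t2 C e3 e3"
  using S unfolding sigma_ok_def Let_def by (elim conjE) assumption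

lemma sig32: "sig C (t2 C e3 e2) = t2 C e2 e3"
  using S unfolding sigma_ok_def Let_def by (elim conjE) assumption

lemma sig33: "sig C (t2 C e3 e3) = t2 C e3 e3"
  using S unfolding sigma_ok_def Let_def by (elim conjE) assumption

lemma sig12_lin: "linear (sig12 C)"
  using S unfolding sigma_ok_def Let_def by (elim conjE) assumption

lemma sig12_ttw[rule_format]: "\<forall>t w. sig12 C (ttw C t w) = ttw C (sig C t) w"
  using S unfolding sigma_ok_def Let_def by (elim conjE) assumption

lemma gm_lin: "linear (gm C)"
  using G unfolding metric_ok_def by (elim conjE) assumption

lemma gm_lt[rule_format]: "\<forall>f t. gm C (lt C f t) = f * gm C t"
  using G unfolding metric_ok_def by (elim conjE) assumption

lemma gm_rt[rule_format]: "\<forall>f t. gm C (rt C t f) = gm C t * f"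
  using G unfolding metric_ok_def by (elim conjE) assumption

lemma gm_vals[rule_format]: "\<forall>a\<in>{1,2,3}. \<forall>b\<in>{1,2,3}. gm C (t2 C (Xi C a) (Xi C b)) = of_real (gmat h a b)"
  using G unfolding metric_ok_def by (elim conjE) assumption

lemma g1_lin: "linear (g1 C)"
  using G unfolding metric_ok_def by (elim conjE) assumption

lemma g1_twt[rule_format]: "\<forall>w t. g1 C (twt C w t) = rw C w (gm C t)"
  using G unfolding metric_ok_def by (elim conjE) assumption

lemma L1_0[simp]: "lw C (a + b) w = lw C (a) w + lw C (b) w"
  using linear_add[OF L_lin1] by simp

lemma L1_1[simp]: "lw C (a - b) w = lw C (a) w - lw C (b) w"
  using linear_diff[OF L_lin1] by simp

lemma L1_2[simp]: "lw C (c *\<^sub>R a) w = c *\<^sub>R lw C (a) w"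
  using linear_scale[OF L_lin1] by simp

lemma L1_3[simp]: "lw C (- a) w = - lw C (a) w"
  using linear_neg[OF L_lin1] by simp

lemma L1_4[simp]: "lw C (0) w = 0"
  using linear_0[OF L_lin1] by simp

lemma L2_0[simp]: "lw C f (a + b) = lw C f (a) + lw C f (b)"
  using linear_add[OF L_lin2] by simp

lemma L2_1[simp]: "lw C f (a - b) = lw C f (a) - lw C f (b)"
  using linear_diff[OF L_lin2] by simp

lemma L2_2[simp]: "lw C f (c *\<^sub>R a) = c *\<^sub>R lw C f (a)"
  using linear_scale[OF L_lin2] by simp

lemma L2_3[simp]: "lw C f (- a) = - lw C f (a)"
  using linear_neg[OF L_lin2] by simp

lemma L2_4[simp]: "lw C f (0) = 0"
  using linear_0[OF L_lin2] by simp

lemma R1_0[simp]: "rw C (a + b) f = rw C (a) f + rw C (b) f"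
  using linear_add[OF R_lin1] by simp

lemma R1_1[simp]: "rw C (a - b) f = rw C (a) f - rw C (b) f"
  using linear_diff[OF R_lin1] by simp

lemma R1_2[simp]: "rw C (c *\<^sub>R a) f = c *\<^sub>R rw C (a) f"
  using linear_scale[OF R_lin1] by simp

lemma R1_3[simp]: "rw C (- a) f = - rw C (a) f"
  using linear_neg[OF R_lin1] by simp

lemma R1_4[simp]: "rw C (0) f = 0"
  using linear_0[OF R_lin1] by simp

lemma R2_0[simp]: "rw C w (a + b) = rw C w (a) + rw C w (b)"
  using linear_add[OF R_lin2] by simp

lemma R2_1[simp]: "rw C w (a - b) = rw C w (a) - rw C w (b)"
  using linear_diff[OF R_lin2] by simp

lemma R2_2[simp]: "rw C w (c *\<^sub>R a) = c *\<^sub>R rw C w (a)"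
  using linear_scale[OF R_lin2] by simp

lemma R2_3[simp]: "rw C w (- a) = - rw C w (a)"
  using linear_neg[OF R_lin2] by simp

lemma R2_4[simp]: "rw C w (0) = 0"
  using linear_0[OF R_lin2] by simp

lemma lt1_0[simp]: "lt C (a + b) t = lt C (a) t + lt C (b) t"
  using linear_add[OF lt_lin1] by simp

lemma lt1_1[simp]: "lt C (a - b) t = lt C (a) t - lt C (b) t"
  using linear_diff[OF lt_lin1] by simp

lemma lt1_2[simp]: "lt C (c *\<^sub>R a) t = c *\<^sub>R lt C (a) t"
  using linear_scale[OF lt_lin1] by simp

lemma lt1_3[simp]: "lt C (- a) t = - lt C (a) t"
  using linear_neg[OF lt_lin1] by simp

lemma lt1_4[simp]: "lt C (0) t = 0"
  using linear_0[OF lt_lin1] by simp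

lemma lt2_0[simp]: "lt C f (a + b) = lt C f (a) + lt C f (b)"
  using linear_add[OF lt_lin2] by simp

lemma lt2_1[simp]: "lt C f (a - b) = lt C f (a) - lt C f (b)"
  using linear_diff[OF lt_lin2] by simp

lemma lt2_2[simp]: "lt C f (c *\<^sub>R a) = c *\<^sub>R lt C f (a)"
  using linear_scale[OF lt_lin2] by simp

lemma lt2_3[simp]: "lt C f (- a) = - lt C f (a)"
  using linear_neg[OF lt_lin2] by simp

lemma lt2_4[simp]: "lt C f (0) = 0"
  using linear_0[OF lt_lin2] by simp

lemma rt1_0[simp]: "rt C (a + b) f = rt C (a) f + rt C (b) f"
  using linear_add[OF rt_lin1] by simp

lemma rt1_1[simp]: "rt C (a - b) f = rt C (a) f - rt C (b) f"
  using linear_diff[OF rt_lin1] by simp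

lemma rt1_2[simp]: "rt C (c *\<^sub>R a) f = c *\<^sub>R rt C (a) f"
  using linear_scale[OF rt_lin1] by simp

lemma rt1_3[simp]: "rt C (- a) f = - rt C (a) f"
  using linear_neg[OF rt_lin1] by simp

lemma rt1_4[simp]: "rt C (0) f = 0"
  using linear_0[OF rt_lin1] by simp

lemma rt2_0[simp]: "rt C t (a + b) = rt C t (a) + rt C t (b)"
  using linear_add[OF rt_lin2] by simp

lemma rt2_1[simp]: "rt C t (a - b) = rt C t (a) - rt C t (b)"
  using linear_diff[OF rt_lin2] by simp

lemma rt2_2[simp]: "rt C t (c *\<^sub>R a) = c *\<^sub>R rt C t (a)"
  using linear_scale[OF rt_lin2] by simp

lemma rt2_3[simp]: "rt C t (- a) = - rt C t (a)"
  using linear_neg[OF rt_lin2] by simp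

lemma rt2_4[simp]: "rt C t (0) = 0"
  using linear_0[OF rt_lin2] by simp

lemma lu1_0[simp]: "lu C (a + b) u = lu C (a) u + lu C (b) u"
  using linear_add[OF lu_lin1] by simp

lemma lu1_1[simp]: "lu C (a - b) u = lu C (a) u - lu C (b) u"
  using linear_diff[OF lu_lin1] by simp

lemma lu1_2[simp]: "lu C (c *\<^sub>R a) u = c *\<^sub>R lu C (a) u"
  using linear_scale[OF lu_lin1] by simp

lemma lu1_3[simp]: "lu C (- a) u = - lu C (a) u"
  using linear_neg[OF lu_lin1] by simp

lemma lu1_4[simp]: "lu C (0) u = 0"
  using linear_0[OF lu_lin1] by simp

lemma lu2_0[simp]: "lu C f (a + b) = lu C f (a) + lu C f (b)"
  using linear_add[OF lu_lin2] by simp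

lemma lu2_1[simp]: "lu C f (a - b) = lu C f (a) - lu C f (b)"
  using linear_diff[OF lu_lin2] by simp

lemma lu2_2[simp]: "lu C f (c *\<^sub>R a) = c *\<^sub>R lu C f (a)"
  using linear_scale[OF lu_lin2] by simp

lemma lu2_3[simp]: "lu C f (- a) = - lu C f (a)"
  using linear_neg[OF lu_lin2] by simp

lemma lu2_4[simp]: "lu C f (0) = 0"
  using linear_0[OF lu_lin2] by simp

lemma T1_0[simp]: "t2 C (a + b) w' = t2 C (a) w' + t2 C (b) w'"
  using linear_add[OF T_lin1] by simp

lemma T1_1[simp]: "t2 C (a - b) w' = t2 C (a) w' - t2 C (b) w'"
  using linear_diff[OF T_lin1] by simp

lemma T1_2[simp]: "t2 C (c *\<^sub>R a) w' = c *\<^sub>R t2 C (a) w'"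
  using linear_scale[OF T_lin1] by simp

lemma T1_3[simp]: "t2 C (- a) w' = - t2 C (a) w'"
  using linear_neg[OF T_lin1] by simp

lemma T1_4[simp]: "t2 C (0) w' = 0"
  using linear_0[OF T_lin1] by simp

lemma T2_0[simp]: "t2 C w (a + b) = t2 C w (a) + t2 C w (b)"
  using linear_add[OF T_lin2] by simp

lemma T2_1[simp]: "t2 C w (a - b) = t2 C w (a) - t2 C w (b)"
  using linear_diff[OF T_lin2] by simp

lemma T2_2[simp]: "t2 C w (c *\<^sub>R a) = c *\<^sub>R t2 C w (a)"
  using linear_scale[OF T_lin2] by simp

lemma T2_3[simp]: "t2 C w (- a) = - t2 C w (a)"
  using linear_neg[OF T_lin2] by simp

lemma T2_4[simp]: "t2 C w (0) = 0"
  using linear_0[OF T_lin2] by simp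

lemma twt1_0[simp]: "twt C (a + b) t = twt C (a) t + twt C (b) t"
  using linear_add[OF twt_lin1] by simp

lemma twt1_1[simp]: "twt C (a - b) t = twt C (a) t - twt C (b) t"
  using linear_diff[OF twt_lin1] by simp

lemma twt1_2[simp]: "twt C (c *\<^sub>R a) t = c *\<^sub>R twt C (a) t"
  using linear_scale[OF twt_lin1] by simp

lemma twt1_3[simp]: "twt C (- a) t = - twt C (a) t"
  using linear_neg[OF twt_lin1] by simp

lemma twt1_4[simp]: "twt C (0) t = 0"
  using linear_0[OF twt_lin1] by simp

lemma twt2_0[simp]: "twt C w (a + b) = twt C w (a) + twt C w (b)"
  using linear_add[OF twt_lin2] by simp

lemma twt2_1[simp]: "twt C w (a - b) = twt C w (a) - twt C w (b)"
  using linear_diff[OF twt_lin2] by simp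

lemma twt2_2[simp]: "twt C w (c *\<^sub>R a) = c *\<^sub>R twt C w (a)"
  using linear_scale[OF twt_lin2] by simp

lemma twt2_3[simp]: "twt C w (- a) = - twt C w (a)"
  using linear_neg[OF twt_lin2] by simp

lemma twt2_4[simp]: "twt C w (0) = 0"
  using linear_0[OF twt_lin2] by simp

lemma ttw1_0[simp]: "ttw C (a + b) w = ttw C (a) w + ttw C (b) w"
  using linear_add[OF ttw_lin1] by simp

lemma ttw1_1[simp]: "ttw C (a - b) w = ttw C (a) w - ttw C (b) w"
  using linear_diff[OF ttw_lin1] by simp

lemma ttw1_2[simp]: "ttw C (c *\<^sub>R a) w = c *\<^sub>R ttw C (a) w"
  using linear_scale[OF ttw_lin1] by simp

lemma ttw1_3[simp]: "ttw C (- a) w = - ttw C (a) w"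
  using linear_neg[OF ttw_lin1] by simp

lemma ttw1_4[simp]: "ttw C (0) w = 0"
  using linear_0[OF ttw_lin1] by simp

lemma ttw2_0[simp]: "ttw C t (a + b) = ttw C t (a) + ttw C t (b)"
  using linear_add[OF ttw_lin2] by simp

lemma ttw2_1[simp]: "ttw C t (a - b) = ttw C t (a) - ttw C t (b)"
  using linear_diff[OF ttw_lin2] by simp

lemma ttw2_2[simp]: "ttw C t (c *\<^sub>R a) = c *\<^sub>R ttw C t (a)"
  using linear_scale[OF ttw_lin2] by simp

lemma ttw2_3[simp]: "ttw C t (- a) = - ttw C t (a)"
  using linear_neg[OF ttw_lin2] by simp

lemma ttw2_4[simp]: "ttw C t (0) = 0"
  using linear_0[OF ttw_lin2] by simp

lemma dl_0[simp]: "dd C (a + b) = dd C (a) + dd C (b)"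
  using linear_add[OF d_lin] by simp

lemma dl_1[simp]: "dd C (a - b) = dd C (a) - dd C (b)"
  using linear_diff[OF d_lin] by simp

lemma dl_2[simp]: "dd C (c *\<^sub>R a) = c *\<^sub>R dd C (a)"
  using linear_scale[OF d_lin] by simp

lemma dl_3[simp]: "dd C (- a) = - dd C (a)"
  using linear_neg[OF d_lin] by simp

lemma dl_4[simp]: "dd C (0) = 0"
  using linear_0[OF d_lin] by simp

lemma sg_0[simp]: "sig C (a + b) = sig C (a) + sig C (b)"
  using linear_add[OF sig_lin] by simp

lemma sg_1[simp]: "sig C (a - b) = sig C (a) - sig C (b)"
  using linear_diff[OF sig_lin] by simp

lemma sg_2[simp]: "sig C (c *\<^sub>R a) = c *\<^sub>R sig C (a)"
  using linear_scale[OF sig_lin] by simp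

lemma sg_3[simp]: "sig C (- a) = - sig C (a)"
  using linear_neg[OF sig_lin] by simp

lemma sg_4[simp]: "sig C (0) = 0"
  using linear_0[OF sig_lin] by simp

lemma sg12_0[simp]: "sig12 C (a + b) = sig12 C (a) + sig12 C (b)"
  using linear_add[OF sig12_lin] by simp

lemma sg12_1[simp]: "sig12 C (a - b) = sig12 C (a) - sig12 C (b)"
  using linear_diff[OF sig12_lin] by simp

lemma sg12_2[simp]: "sig12 C (c *\<^sub>R a) = c *\<^sub>R sig12 C (a)"
  using linear_scale[OF sig12_lin] by simp

lemma sg12_3[simp]: "sig12 C (- a) = - sig12 C (a)"
  using linear_neg[OF sig12_lin] by simp

lemma sg12_4[simp]: "sig12 C (0) = 0"
  using linear_0[OF sig12_lin] by simp

lemma gml_0[simp]: "gm C (a + b) = gm C (a) + gm C (b)"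
  using linear_add[OF gm_lin] by simp

lemma gml_1[simp]: "gm C (a - b) = gm C (a) - gm C (b)"
  using linear_diff[OF gm_lin] by simp

lemma gml_2[simp]: "gm C (c *\<^sub>R a) = c *\<^sub>R gm C (a)"
  using linear_scale[OF gm_lin] by simp

lemma gml_3[simp]: "gm C (- a) = - gm C (a)"
  using linear_neg[OF gm_lin] by simp

lemma gml_4[simp]: "gm C (0) = 0"
  using linear_0[OF gm_lin] by simp

lemma g1l_0[simp]: "g1 C (a + b) = g1 C (a) + g1 C (b)"
  using linear_add[OF g1_lin] by simp

lemma g1l_1[simp]: "g1 C (a - b) = g1 C (a) - g1 C (b)"
  using linear_diff[OF g1_lin] by simp

lemma g1l_2[simp]: "g1 C (c *\<^sub>R a) = c *\<^sub>R g1 C (a)"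
  using linear_scale[OF g1_lin] by simp

lemma g1l_3[simp]: "g1 C (- a) = - g1 C (a)"
  using linear_neg[OF g1_lin] by simp

lemma g1l_4[simp]: "g1 C (0) = 0"
  using linear_0[OF g1_lin] by simp


lemma dbl: "c *\<^sub>R (v::'v::real_vector) + (c *\<^sub>R v + w) = (c*2) *\<^sub>R v + w"
proof -
  have "(c*2) *\<^sub>R v = c *\<^sub>R v + c *\<^sub>R v" by (metis mult_2_right scaleR_add_left)
  then show ?thesis by (simp add: add.assoc)
qed
lemma sw1: "(a::'v::ab_group_add) - b = c \<Longrightarrow> b = a - c" by (auto simp: algebra_simps)
lemma sw2: "(a::'v::ab_group_add) + b = c \<Longrightarrow> b = c - a" by (auto simp: algebra_simps)

lemma Rv:
  "rw C e3 a1 = lw C a1 e3 - h *\<^sub>R lw C a2 e3"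
  "rw C e3 xv = lw C xv e3"
  "rw C e3 a2 = lw C a2 e3"
  "rw C e2 xv = lw C xv e2 + h *\<^sub>R lw C a2 e3"
  "rw C e2 a2 = - lw C a2 e2"
  "rw C e1 xv = lw C xv e1 + h *\<^sub>R lw C a2 e2"
  "rw C e1 a2 = lw C a2 e1 + h *\<^sub>R lw C a2 e3"
  using sw1[OF calc_rel3] sw1[OF calc_rel6] sw1[OF calc_rel9] sw1[OF calc_rel5]
    sw2[OF calc_rel8] sw1[OF calc_rel4] sw1[OF calc_rel7]
  by simp_all

lemma rho_exp: "r = lw C a1 e3 + lw C xv e2 - lw C a2 e1 - (h/2) *\<^sub>R lw C a2 e3"
  unfolding rho_def by simp

lemma T_e3r: "t2 C e3 r = lt C a1 (t2 C e3 e3) - h *\<^sub>R lt C a2 (t2 C e3 e3) + lt C xv (t2 C e3 e2)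
     - lt C a2 (t2 C e3 e1) - (h/2) *\<^sub>R lt C a2 (t2 C e3 e3)"
  by (subst rho_exp) (simp add: T_RL[symmetric] Rv T_L)

lemma T_re3: "t2 C r e3 = lt C a1 (t2 C e3 e3) + lt C xv (t2 C e2 e3)
     - lt C a2 (t2 C e1 e3) - (h/2) *\<^sub>R lt C a2 (t2 C e3 e3)"
  by (subst rho_exp) (simp add: T_L)

lemma sig_e3r: "sig C (t2 C e3 r) = t2 C r e3"
  unfolding T_e3r T_re3 by (simp add: sig_lt sig31 sig32 sig33 sig31[unfolded One_nat_def] algebra_simps)

lemma gm_e3r: "gm C (t2 C e3 r) = - a2"
  unfolding T_e3r by (simp add: gm_lt gm_vals gmat_def)

lemma gm_re2: "gm C (t2 C r e2) = xv"
  by (subst rho_exp) (simp add: T_L gm_lt gm_vals gmat_def)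

lemma gm32: "gm C (t2 C e3 e2) = 0"
  by (simp add: gm_vals gmat_def)

lemma alg_a: "a2 * xv = xv * a2" using alg_rel3 by simp
lemma alg_b: "a2 * a1 = - (a1 * a2)" using sw2[OF alg_rel2] by simp
lemma alg_c: "a1 * xv = xv * a1 - h *\<^sub>R (xv * a2)" using alg_rel1 by (simp add: algebra_simps)
lemma alg_d: "a2 * (a2 * g) = 0" by (simp add: mult.assoc[symmetric] alg_rel4)
lemma alg_key: "a2 * (a1 * xv) = - (xv * (a1 * a2))"
proof -
  have "a2 * (a1 * xv) = (a2 * a1) * xv" by (simp add: mult.assoc)
  also have "\<dots> = - (a1 * (a2 * xv))" by (simp add: alg_b mult.assoc)
  also have "\<dots> = - ((a1 * xv) * a2)" by (simp add: alg_a mult.assoc)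
  also have "\<dots> = - ((xv * a1 - h *\<^sub>R (xv * a2)) * a2)" by (simp add: alg_c)
  also have "\<dots> = - (xv * (a1 * a2)) + h *\<^sub>R (xv * (a2 * a2))"
    by (simp add: algebra_simps)
  finally show ?thesis by (simp add: alg_rel4)
qed
lemma alg_e: "a2 * (xv * xv) = xv * (xv * a2)"
  by (metis alg_a mult.assoc)
lemma alg_f: "a2 * (xv * a2) = 0"
  by (metis alg_a alg_d)

lemma L_a2_Rrx: "lw C a2 (rw C r xv) = - lw C (xv * (a1 * a2)) e3 + lw C (xv * (xv * a2)) e2"
  by (subst rho_exp) (simp add: LR[symmetric] Rv L_mult[symmetric] mult.assoc alg_key alg_e alg_f alg_d alg_rel4 alg_a)

lemma L_x_Rra2: "lw C xv (rw C r a2) = lw C (xv * (a1 * a2)) e3 - lw C (xv * (xv * a2)) e2"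
  by (subst rho_exp) (simp add: LR[symmetric] Rv[unfolded One_nat_def] L_mult[symmetric] mult.assoc alg_d alg_rel4)


end

locale hc = hs +
  fixes c0 c1 :: real
  assumes Co: "connection_ok C h c0 c1"
begin

lemma DD_lin: "linear (DD C)"
  using Co unfolding connection_ok_def by (elim conjE) assumption
lemma DD_vals[rule_format]: "\<forall>a\<in>{1,2,3}. \<forall>b\<in>{1,2,3}.
         DD C (t2 C (Xi C a) (Xi C b)) =
           ttw C (DXi C h c0 c1 a) (Xi C b)
           + ((-1::real) ^ hat a) *\<^sub>R sig12 C (twt C (Xi C a) (DXi C h c0 c1 b))"
  using Co unfolding connection_ok_def by (elim conjE) assumption
lemma DD_ev[rule_format]: "\<forall>f\<in>Aev C. \<forall>t. DD C (lt C f t) = twt C (dd C f) t + lu C f (DD C t)"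
  using Co unfolding connection_ok_def by (elim conjE) assumption
lemma DD_od[rule_format]: "\<forall>f\<in>Aod C. \<forall>t. DD C (lt C f t) = twt C (dd C f) t - lu C f (DD C t)"
  using Co unfolding connection_ok_def by (elim conjE) assumption

lemma DD_0[simp]: "DD C 0 = 0" using linear_0[OF DD_lin] .
lemma DD_add[simp]: "DD C (a + b) = DD C a + DD C b" using linear_add[OF DD_lin] .

lemma DXi3: "DXi C h c0 c1 3 = c0 *\<^sub>R lt C a2 (t2 C r r) + c1 *\<^sub>R (t2 C e3 r - t2 C r e3)"
  by (simp add: DXi_def XX_def hat_def)
lemma DXi2: "DXi C h c0 c1 2 = c0 *\<^sub>R lt C xv (t2 C r r) + c1 *\<^sub>R (- t2 C e2 r - t2 C r e2)"
  by (simp add: DXi_def XX_def hat_def)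

lemma DD32: "DD C (t2 C e3 e2) = ttw C (DXi C h c0 c1 3) e2 + sig12 C (twt C e3 (DXi C h c0 c1 2))"
  using DD_vals[of 3 2] by (simp add: hat_def)

lemma termA: "g1 C (ttw C (DXi C h c0 c1 3) e2) = c0 *\<^sub>R rw C (lw C a2 r) xv + c1 *\<^sub>R lw C xv e3"
  unfolding DXi3 by (simp add: ttw_L ttw_T twt_L[symmetric] g1_twt gm_re2 gm32 Rv)

lemma B1: "g1 C (sig12 C (twt C e3 (lt C xv (t2 C r r)))) = rw C (lw C xv r) (- a2)"
proof -
  have "twt C e3 (lt C xv (t2 C r r)) = twt C (rw C e3 xv) (t2 C r r)" by (simp add: twt_R)
  also have "\<dots> = lu C xv (twt C e3 (t2 C r r))" by (simp add: Rv twt_L)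
  also have "\<dots> = ttw C (lt C xv (t2 C e3 r)) r" by (simp add: ttw_T ttw_L)
  finally have 1: "twt C e3 (lt C xv (t2 C r r)) = ttw C (lt C xv (t2 C e3 r)) r" .
  have "sig12 C (ttw C (lt C xv (t2 C e3 r)) r) = ttw C (lt C xv (t2 C r e3)) r"
    by (simp add: sig12_ttw sig_lt sig_e3r)
  also have "\<dots> = twt C (lw C xv r) (t2 C e3 r)" by (simp add: ttw_L ttw_T twt_L)
  finally show ?thesis using 1 by (simp add: g1_twt gm_e3r)
qed

lemma B2: "g1 C (sig12 C (twt C e3 (t2 C e2 r))) = lw C a2 e2"
proof -
  have "twt C e3 (t2 C e2 r) = ttw C (t2 C e3 e2) r" by (simp add: ttw_T)
  also have "sig12 C \<dots> = ttw C (t2 C e2 e3) r" by (simp only: sig12_ttw sig32)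
  also have "\<dots> = twt C e2 (t2 C e3 r)" by (simp add: ttw_T)
  finally show ?thesis by (simp add: g1_twt gm_e3r Rv)
qed

lemma B3: "g1 C (sig12 C (twt C e3 (t2 C r e2))) = 0"
proof -
  have "twt C e3 (t2 C r e2) = ttw C (t2 C e3 r) e2" by (simp add: ttw_T)
  also have "sig12 C \<dots> = ttw C (t2 C r e3) e2" by (simp only: sig12_ttw sig_e3r)
  also have "\<dots> = twt C r (t2 C e3 e2)" by (simp add: ttw_T)
  finally show ?thesis by (simp add: g1_twt gm32)
qed

lemma termB: "g1 C (sig12 C (twt C e3 (DXi C h c0 c1 2))) = c0 *\<^sub>R rw C (lw C xv r) (- a2) - c1 *\<^sub>R lw C a2 e2"
  unfolding DXi2 using B1 B2 B3 by simp

lemma g1DD32: "g1 C (DD C (t2 C e3 e2)) = lw C 0 e1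
   + lw C ((2*c0) *\<^sub>R (xv * (xv * a2)) - c1 *\<^sub>R a2) e2
   + lw C (c1 *\<^sub>R xv - (2*c0) *\<^sub>R (xv * (a1 * a2))) e3"
proof -
  have "g1 C (DD C (t2 C e3 e2)) = c0 *\<^sub>R rw C (lw C a2 r) xv + c1 *\<^sub>R lw C xv e3
       + (c0 *\<^sub>R rw C (lw C xv r) (- a2) - c1 *\<^sub>R lw C a2 e2)"
    unfolding DD32 by (simp add: termA termB)
  also have "\<dots> = c0 *\<^sub>R lw C a2 (rw C r xv) + c1 *\<^sub>R lw C xv e3
       - c0 *\<^sub>R lw C xv (rw C r a2) - c1 *\<^sub>R lw C a2 e2"
    by (simp add: LR[symmetric])
  also have "\<dots> = lw C 0 e1
   + lw C ((2*c0) *\<^sub>R (xv * (xv * a2)) - c1 *\<^sub>R a2) e2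
   + lw C (c1 *\<^sub>R xv - (2*c0) *\<^sub>R (xv * (a1 * a2))) e3"
    unfolding L_a2_Rrx L_x_Rra2 by (simp add: algebra_simps) (simp add: dbl)
  finally show ?thesis .
qed


lemma polyA_monom1: "polyA a (monom c 1) = c *\<^sub>R a"
  by (cases "c = 0") (auto simp: polyA_def degree_monom_eq coeff_monom)
lemma polyA_0: "polyA a 0 = 0"
  by (simp add: polyA_def)

lemma forward:
  assumes mc: "metric_compatible C"
  shows "c0 = 0 \<and> c1 = 0"
proof -
  have "dd C (gm C (t2 C e3 e2)) = g1 C (DD C (t2 C e3 e2))"
    using mc unfolding metric_compatible_def by blast
  then have "lw C 0 e1
   + lw C ((2*c0) *\<^sub>R (xv * (xv * a2)) - c1 *\<^sub>R a2) e2
   + lw C (c1 *\<^sub>R xv - (2*c0) *\<^sub>R (xv * (a1 * a2))) e3 = 0"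
    by (simp add: g1DD32 gm32)
  then have f3: "c1 *\<^sub>R xv - (2*c0) *\<^sub>R (xv * (a1 * a2)) = 0"
    using free by blast
  have "polyA xv (monom c1 1) + polyA xv 0 * a1 + polyA xv 0 * a2
        + polyA xv (monom (-(2*c0)) 1) * (a1 * a2) = 0"
    using f3 by (simp add: polyA_monom1 polyA_monom1[unfolded One_nat_def] polyA_0 mult_scaleR_left)
  then have "monom c1 1 = 0 \<and> monom (-(2*c0)) 1 = (0::real poly)"
    using pbw by blast
  then show ?thesis by simp
qed

definition P where
  "P t \<longleftrightarrow> dd C (gm C t) = g1 C (DD C t)"

lemma P_add: "P a \<Longrightarrow> P b \<Longrightarrow> P (a + b)"
  unfolding P_def by simp

lemma P_0: "P 0"
  unfolding P_def by simp

lemma R_ofreal: "rw C w (of_real g) = g *\<^sub>R w"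
  by (simp add: of_real_def R_one)

context
  assumes z: "c0 = 0" "c1 = 0"
begin

lemma DXi0: "DXi C h c0 c1 a = 0"
  by (simp add: DXi_def z)

lemma P_basic:
  assumes a: "a \<in> {1,2,3}" and b: "b \<in> {1,2,3}"
  shows "P (lt C f (t2 C (Xi C a) (Xi C b)))"
proof -
  let ?T = "t2 C (Xi C a) (Xi C b)"
  have D0: "DD C ?T = 0" using DD_vals[OF a b] by (simp add: DXi0)
  have gT: "gm C ?T = of_real (gmat h a b)" using gm_vals[OF a b] .
  obtain f0 f1 where f0: "f0 \<in> Aev C" and f1: "f1 \<in> Aod C" and f: "f = f0 + f1"
    using alg_dec by blast
  have "dd C (gm C (lt C f ?T)) = gmat h a b *\<^sub>R (dd C f0 + dd C f1)"
    by (simp add: gm_lt gT f of_real_def mult_scaleR_right scaleR_add_right)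
  moreover have "g1 C (DD C (lt C f ?T)) = gmat h a b *\<^sub>R (dd C f0 + dd C f1)"
    by (simp add: f DD_ev[OF f0] DD_od[OF f1] D0 g1_twt gT R_ofreal scaleR_add_right)
  ultimately show ?thesis unfolding P_def by simp
qed

lemma P_lt_Tw:
  assumes b: "b \<in> {1,2,3}"
  shows "P (lt C f (t2 C w (Xi C b)))"
proof -
  obtain k1 k2 k3 where w: "w = lw C k1 e1 + lw C k2 e2 + lw C k3 e3" using span by blast
  have "lt C f (t2 C w (Xi C b)) = lt C (f*k1) (t2 C e1 (Xi C b)) + lt C (f*k2) (t2 C e2 (Xi C b))
      + lt C (f*k3) (t2 C e3 (Xi C b))"
    by (simp add: w T_L lt_mult)
  then show ?thesis using P_add P_basic b by simp
qed

lemma P_lt_eTw: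
  assumes a: "a \<in> {1,2,3}"
  shows "P (lt C f (t2 C (Xi C a) w))"
proof -
  obtain k1 k2 k3 where w: "w = lw C k1 e1 + lw C k2 e2 + lw C k3 e3" using span by blast
  have "lt C f (t2 C (Xi C a) w) = lt C f (t2 C (rw C (Xi C a) k1) e1) + lt C f (t2 C (rw C (Xi C a) k2) e2)
      + lt C f (t2 C (rw C (Xi C a) k3) e3)"
    by (simp add: w T_RL)
  then show ?thesis using P_add P_lt_Tw by simp
qed

lemma P_T: "P (t2 C w w')"
proof -
  obtain k1 k2 k3 where w: "w = lw C k1 e1 + lw C k2 e2 + lw C k3 e3" using span by blast
  have "t2 C w w' = lt C k1 (t2 C e1 w') + lt C k2 (t2 C e2 w') + lt C k3 (t2 C e3 w')"
    by (simp add: w T_L)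
  then show ?thesis using P_add P_lt_eTw by simp
qed

lemma P_all: "P t"
proof -
  obtain ps where t: "t = (\<Sum>(w, w')\<leftarrow>ps. t2 C w w')" using T_sum by blast
  have "P (\<Sum>(w, w')\<leftarrow>ps. t2 C w w')"
  proof (induction ps)
    case Nil then show ?case by (simp add: P_0)
  next
    case (Cons p ps) then show ?case by (cases p) (simp add: P_add P_T)
  qed
  then show ?thesis using t by simp
qed

lemma backward: "metric_compatible C"
  using P_all unfolding P_def metric_compatible_def by blast

end

end

theorem mainTheorem4:
  fixes C :: "('a::real_algebra_1, 'w::real_vector, 't::real_vector, 'u::real_vector) hcalc"
    and h c0 c1 :: real
  assumes "alg_ok C h" and "modules_ok C" and "calc_ok C h"
    and "sigma_ok C h" and "metric_ok C h"
    and "connection_ok C h c0 c1"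
  shows "metric_compatible C \<longleftrightarrow> (c0 = 0 \<and> c1 = 0)"
proof -
  interpret hc C h c0 c1 using assms by unfold_locales
  show ?thesis using forward backward by blast
qed

end
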